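(* Suppose $n/N\to\lambda$ as $\nu\to\infty$ with $0\le\lambda<1$. Then $n\gamma\to c$ as $\nu\to\infty$ for some $c\ge1-\lambda>0$.
   Context: For a sequence of population sizes $N=N_\nu$ and sample sizes $n=n_\nu<N$ with $N,n\to\infty$, let $N_1,\dots,N_n$ be the group sizes of the RHC design: $N_i=N/n$ for all $i$ if $N/n$ is an integer; otherwise $N_i=\lfloor N/n\rfloor$ for $i=1,\dots,k$ and $N_i=\lfloor N/n\rfloor+1$ for $i=k+1,\dots,n$, with $k$ such that $\sum_{i=1}^nN_i=N$. Define $\gamma=\sum_{i=1}^nN_i(N_i-1)/(N(N-1))$. *)

theory Defs
  imports Complex_Main
begin

text \<open>RHC design: population of size N split into n groups. The number k of groups of
  size floor(N/n) is determined by the requirement that the sizes sum to N, namely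
  k = n - (N mod n); if n divides N then k = n and all groups have size N/n.\<close>

definition rhc_k :: "nat \<Rightarrow> nat \<Rightarrow> nat" where
  "rhc_k N n = n - N mod n"

definition rhc_group_size :: "nat \<Rightarrow> nat \<Rightarrow> nat \<Rightarrow> nat" where
  "rhc_group_size N n i = (if i \<le> rhc_k N n then N div n else N div n + 1)"

definition rhc_gamma :: "nat \<Rightarrow> nat \<Rightarrow> real" where
  "rhc_gamma N n =
     (\<Sum>i=1..n. real (rhc_group_size N n i) * (real (rhc_group_size N n i) - 1))
     / (real N * (real N - 1))"

end

theory Submission
  imports Defs
begin

definition phi :: "real \<Rightarrow> real" where "phi y = frac y * (1 - frac y)"

lemma phi_nonneg: "0 \<le> phi y"
  unfolding phi_def using frac_lt_1[of y] frac_ge_0[of y] by simp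

lemma phi_bound: "phi y \<le> \<bar>y - of_int m\<bar>"
proof (cases "m \<le> floor y")
  case True
  have "frac y \<le> y - of_int m" using True unfolding frac_def by linarith
  moreover have "frac y * (1 - frac y) \<le> frac y"
    using frac_ge_0[of y] frac_lt_1[of y] by (simp add: mult_left_le)
  ultimately show ?thesis unfolding phi_def by linarith
next
  case False
  have "1 - frac y \<le> of_int m - y" using False unfolding frac_def by linarith
  moreover have "frac y * (1 - frac y) \<le> 1 - frac y"
    using frac_ge_0[of y] frac_lt_1[of y] by (simp add: mult_left_le_one_le)
  ultimately show ?thesis unfolding phi_def by linarith
qed

lemma phi_cont: "isCont phi x"
proof (cases "x \<in> \<int>")
  case False
  have "continuous (at x) frac" using continuous_frac[OF False] .
  then have "continuous (at x) (\<lambda>y. frac y * (1 - frac y))"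
    by (intro continuous_intros)
  then show ?thesis unfolding phi_def by simp
next
  case True
  then obtain m where m: "x = of_int m" by (auto elim: Ints_cases)
  have px: "phi x = 0" unfolding phi_def m by simp
  have "((\<lambda>y. \<bar>y - x\<bar>) \<longlongrightarrow> \<bar>x - x\<bar>) (at x)"
    by (intro tendsto_intros)
  then have lim: "((\<lambda>y. \<bar>y - x\<bar>) \<longlongrightarrow> 0) (at x)" by simp
  have "(phi \<longlongrightarrow> 0) (at x)"
    by (rule tendsto_sandwich[OF _ _ tendsto_const lim])
       (use phi_nonneg phi_bound[of _ m] m in auto)
  then show ?thesis unfolding isCont_def px .
qed

lemma sum_if: "(\<Sum>i=1..n. if i \<le> k then a else b) = of_nat (min k n) * a + of_nat (n - k) * (b::real)"
proof (induction n)
  case 0 then show ?case by simp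
next
  case (Suc n)
  have e: "(\<Sum>i=1..Suc n. if i \<le> k then a else b) = (\<Sum>i=1..n. if i \<le> k then a else b) + (if Suc n \<le> k then a else b)"
    by simp
  show ?case
  proof (cases "Suc n \<le> k")
    case True
    then have "min k (Suc n) = Suc n" "min k n = n" "Suc n - k = 0" "n - k = 0" by auto
    then show ?thesis unfolding e Suc.IH using True by (simp add: algebra_simps)
  next
    case False
    then have "min k (Suc n) = k" "min k n = k" "Suc n - k = Suc (n - k)" by auto
    then show ?thesis unfolding e Suc.IH using False by (simp add: algebra_simps)
  qed
qed

lemma alg:
  fixes a b Q M :: real
  assumes a: "a > 0" and M: "M = a * Q + b" "M > 1"
  shows "a * ((a - b) * (Q * (Q - 1)) + b * ((Q + 1) * Q)) / (M * (M - 1))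
     = M / (M - 1) * ((1 - a / M) + (a / M)^2 * (b / a * (1 - b / a)))"
proof -
  have M0: "M \<noteq> 0" "M - 1 \<noteq> 0" using M by auto
  have e1: "(1 - a / M) + (a / M)^2 * (b / a * (1 - b / a)) = (M*M - a*M + a*b - b*b) / (M*M)"
    using a M0 by (simp add: field_simps power2_eq_square)
  have "M / (M - 1) * ((1 - a / M) + (a / M)^2 * (b / a * (1 - b / a)))
      = M / (M - 1) * ((M*M - a*M + a*b - b*b) / (M*M))" by (simp only: e1)
  also have "\<dots> = (M*M - a*M + a*b - b*b) / (M * (M - 1))"
    using M0 by (simp add: field_simps)
  also have "M*M - a*M + a*b - b*b = a * ((a - b) * (Q * (Q - 1)) + b * ((Q + 1) * Q))"
    unfolding M by (simp add: algebra_simps)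
  finally show ?thesis by (simp add: mult.commute)
qed

lemma ident:
  assumes "0 < n" "n < N"
  shows "real n * rhc_gamma N n = real N / (real N - 1) *
     ((1 - real n / real N) + (real n / real N)^2 * phi (real N / real n))"
proof -
  define q where "q = N div n"
  define r where "r = N mod n"
  have rn: "r < n" using assms unfolding r_def by simp
  have Nq: "real N = real n * real q + real r"
    unfolding q_def r_def by (metis div_mult_mod_eq of_nat_add of_nat_mult mult.commute)
  have k: "rhc_k N n = n - r" unfolding rhc_k_def r_def by simp
  have S: "(\<Sum>i=1..n. real (rhc_group_size N n i) * (real (rhc_group_size N n i) - 1))
      = real (n - r) * (real q * (real q - 1)) + real r * ((real q + 1) * real q)"
  proof -
    have "(\<Sum>i=1..n. real (rhc_group_size N n i) * (real (rhc_group_size N n i) - 1))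
       = (\<Sum>i=1..n. if i \<le> n - r then real q * (real q - 1) else (real q + 1) * real q)"
      by (rule sum.cong) (auto simp: rhc_group_size_def k q_def)
    also have "\<dots> = real (n - r) * (real q * (real q - 1)) + real r * ((real q + 1) * real q)"
      using rn sum_if[where n=n and k="n - r" and a="real q * (real q - 1)" and b="(real q + 1) * real q"]
      by (simp add: min_def)
    finally show ?thesis .
  qed
  have fr: "frac (real N / real n) = real r / real n"
  proof -
    have "real N / real n = of_int (int q) + real r / real n"
      using Nq assms by (simp add: field_simps)
    then have "frac (real N / real n) = frac (real r / real n)"
      using frac_add_of_int_left[of "int q" "real r / real n"] by simp
    also have "\<dots> = real r / real n" using rn by (intro frac_eq_id) auto
    finally show ?thesis .
  qed
  have N1: "real N - 1 > 0" using assms by simp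
  have rr: "real (n - r) = real n - real r" using rn by simp
  show ?thesis
    unfolding rhc_gamma_def S phi_def fr rr
    using alg[of "real n" "real N" "real q" "real r"] assms N1 Nq by simp
qed


theorem lemma2:
  fixes N n :: "nat \<Rightarrow> nat" and lam :: real
  assumes "\<And>\<nu>. n \<nu> < N \<nu>"
    and "filterlim N at_top sequentially"
    and "filterlim n at_top sequentially"
    and "(\<lambda>\<nu>. real (n \<nu>) / real (N \<nu>)) \<longlonglongrightarrow> lam"
    and "0 \<le> lam" and "lam < 1"
  shows "\<exists>c. c \<ge> 1 - lam \<and> 1 - lam > 0 \<and>
           (\<lambda>\<nu>. real (n \<nu>) * rhc_gamma (N \<nu>) (n \<nu>)) \<longlonglongrightarrow> c"
proof -
  define c where "c = 1 - lam + lam^2 * phi (inverse lam)"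
  have c_ge: "c \<ge> 1 - lam" unfolding c_def using phi_nonneg[of "inverse lam"] by simp
  define y where "y = (\<lambda>\<nu>. real (n \<nu>) / real (N \<nu>))"
  have ylim: "y \<longlonglongrightarrow> lam" using assms(4) unfolding y_def .
  have evn: "eventually (\<lambda>\<nu>. n \<nu> \<ge> 1) sequentially"
    using assms(3) by (simp add: filterlim_at_top)
  have NR: "filterlim (\<lambda>\<nu>. real (N \<nu>)) at_top sequentially"
    by (rule filterlim_compose[OF filterlim_real_sequentially assms(2)])
  have "(\<lambda>\<nu>. inverse (1 - inverse (real (N \<nu>)))) \<longlonglongrightarrow> inverse (1 - 0)"
    by (intro tendsto_intros tendsto_inverse_0_at_top[OF NR]) simp
  then have F0: "(\<lambda>\<nu>. inverse (1 - inverse (real (N \<nu>)))) \<longlonglongrightarrow> 1" by simp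
  have F: "(\<lambda>\<nu>. real (N \<nu>) / (real (N \<nu>) - 1)) \<longlonglongrightarrow> 1"
  proof (rule Lim_transform_eventually[OF F0])
    show "\<forall>\<^sub>F \<nu> in sequentially. inverse (1 - inverse (real (N \<nu>))) = real (N \<nu>) / (real (N \<nu>) - 1)"
      using evn
    proof eventually_elim
      case (elim \<nu>)
      then have "real (N \<nu>) > 1" using assms(1)[of \<nu>] by simp
      then show ?case by (simp add: field_simps)
    qed
  qed
  have G: "(\<lambda>\<nu>. (1 - y \<nu>) + (y \<nu>)^2 * phi (real (N \<nu>) / real (n \<nu>))) \<longlonglongrightarrow> c"
  proof (cases "lam = 0")
    case True
    have y2: "(\<lambda>\<nu>. (y \<nu>)^2) \<longlonglongrightarrow> 0" using ylim True by (metis tendsto_power power_zero_numeral)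
    have "(\<lambda>\<nu>. (y \<nu>)^2 * phi (real (N \<nu>) / real (n \<nu>))) \<longlonglongrightarrow> 0"
    proof (rule tendsto_sandwich[OF _ _ tendsto_const y2])
      show "\<forall>\<^sub>F \<nu> in sequentially. 0 \<le> (y \<nu>)^2 * phi (real (N \<nu>) / real (n \<nu>))"
        using phi_nonneg by simp
      have "\<And>z. phi z \<le> 1" unfolding phi_def
        using frac_ge_0 frac_lt_1 by (smt (verit) mult_le_one)
      then show "\<forall>\<^sub>F \<nu> in sequentially. (y \<nu>)^2 * phi (real (N \<nu>) / real (n \<nu>)) \<le> (y \<nu>)^2"
        by (simp add: mult_left_le)
    qed
    then have "(\<lambda>\<nu>. (1 - y \<nu>) + (y \<nu>)^2 * phi (real (N \<nu>) / real (n \<nu>))) \<longlonglongrightarrow> (1 - lam) + 0"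
      by (intro tendsto_intros ylim)
    then show ?thesis unfolding c_def using True by simp
  next
    case False
    have inv: "(\<lambda>\<nu>. inverse (y \<nu>)) \<longlonglongrightarrow> inverse lam"
      by (rule tendsto_inverse[OF ylim False])
    have "(\<lambda>\<nu>. real (N \<nu>) / real (n \<nu>)) = (\<lambda>\<nu>. inverse (y \<nu>))"
      unfolding y_def by (simp add: inverse_divide)
    with inv have "(\<lambda>\<nu>. real (N \<nu>) / real (n \<nu>)) \<longlonglongrightarrow> inverse lam" by simp
    then have "(\<lambda>\<nu>. phi (real (N \<nu>) / real (n \<nu>))) \<longlonglongrightarrow> phi (inverse lam)"
      by (rule isCont_tendsto_compose[OF phi_cont])
    then have "(\<lambda>\<nu>. (1 - y \<nu>) + (y \<nu>)^2 * phi (real (N \<nu>) / real (n \<nu>))) \<longlonglongrightarrow> (1 - lam) + lam^2 * phi (inverse lam)"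
      by (intro tendsto_intros ylim)
    then show ?thesis unfolding c_def by simp
  qed
  have P: "(\<lambda>\<nu>. real (N \<nu>) / (real (N \<nu>) - 1) * ((1 - y \<nu>) + (y \<nu>)^2 * phi (real (N \<nu>) / real (n \<nu>)))) \<longlonglongrightarrow> 1 * c"
    by (rule tendsto_mult[OF F G])
  then have P': "(\<lambda>\<nu>. real (N \<nu>) / (real (N \<nu>) - 1) * ((1 - y \<nu>) + (y \<nu>)^2 * phi (real (N \<nu>) / real (n \<nu>)))) \<longlonglongrightarrow> c"
    by (simp only: mult_1)
  have "(\<lambda>\<nu>. real (n \<nu>) * rhc_gamma (N \<nu>) (n \<nu>)) \<longlonglongrightarrow> c"
  proof (rule Lim_transform_eventually[OF P'])
    show "\<forall>\<^sub>F \<nu> in sequentially. real (N \<nu>) / (real (N \<nu>) - 1) * ((1 - y \<nu>) + (y \<nu>)^2 * phi (real (N \<nu>) / real (n \<nu>))) = real (n \<nu>) * rhc_gamma (N \<nu>) (n \<nu>)"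
      using evn
    proof eventually_elim
      case (elim \<nu>)
      show ?case unfolding y_def using ident[of "n \<nu>" "N \<nu>"] elim assms(1)[of \<nu>] by simp
    qed
  qed
  then show ?thesis using c_ge assms(6) by auto
qed

end
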